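(* A mapping $f\in C^1(\mathbb{R}^n;\mathbb{R}^n)$ is a (global) diffeomorphism onto $\mathbb{R}^n$ if and only if (i) $\det f'(x)\neq0$ for every $x\in\mathbb{R}^n$, and (ii) there exists a coercive function $k\in C^1(\mathbb{R}^n;\mathbb{R}_+)$ such that $$\sup\{\|k'(x)\circ f'(x)^{-1}\|: x\in\mathbb{R}^n\}<+\infty,$$ equivalently $\sup\{|\nabla k(x)\cdot f'(x)^{-1}u|: x\in\mathbb{R}^n,\ u\in\mathbb{R}^n,\ |u|=1\}<+\infty$.
   Context: $\mathbb{R}_+=[0,+\infty)$. A function $k:\mathbb{R}^n\to\mathbb{R}_+$ is coercive if it is continuous and $k(x)\to+\infty$ as $|x|\to+\infty$. $\|\cdot\|$ denotes the operator norm of a linear functional. *)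

theory Defs
  imports "HOL-Analysis.Analysis"
begin

definition C1_with :: "('a::real_normed_vector \<Rightarrow> 'b::real_normed_vector) \<Rightarrow> ('a \<Rightarrow> ('a \<Rightarrow>\<^sub>L 'b)) \<Rightarrow> bool" where
  "C1_with f D \<longleftrightarrow> (\<forall>x. (f has_derivative blinfun_apply (D x)) (at x)) \<and> continuous_on UNIV D"

definition C1_map :: "('a::real_normed_vector \<Rightarrow> 'b::real_normed_vector) \<Rightarrow> bool" where
  "C1_map f \<longleftrightarrow> (\<exists>D. C1_with f D)"

definition global_diffeo :: "('a::real_normed_vector \<Rightarrow> 'a) \<Rightarrow> bool" where
  "global_diffeo f \<longleftrightarrow> C1_map f \<and> (\<exists>g. (\<forall>x. g (f x) = x) \<and> (\<forall>y. f (g y) = y) \<and> C1_map g)"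

definition coercive :: "('a::real_normed_vector \<Rightarrow> real) \<Rightarrow> bool" where
  "coercive k \<longleftrightarrow> continuous_on UNIV k \<and> filterlim k at_top at_infinity"

end

theory Submission
  imports Defs
begin

lemma local_inv:
  fixes f :: "'a::euclidean_space \<Rightarrow> 'a" and f' :: "'a \<Rightarrow> 'a \<Rightarrow>\<^sub>L 'a"
  assumes "C1_with f f'" "\<forall>x. bij (blinfun_apply (f' x))"
  shows "\<exists>U V h. open U \<and> x \<in> U \<and> open V \<and> homeomorphism U V f h \<and>
     (\<forall>y\<in>V. (h has_derivative inv (blinfun_apply (f' (h y)))) (at y))"
proof -
  have bl: "bounded_linear (inv (blinfun_apply (f' x)))"
    using assms(2) by (simp add: bij_is_inj inj_linear_imp_inv_bounded_linear blinfun.bounded_linear_right)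
  have inv: "Blinfun (inv (blinfun_apply (f' x))) o\<^sub>L f' x = id_blinfun"
    apply (rule blinfun_eqI)
    using assms(2) bl by (simp add: bounded_linear_Blinfun_apply bij_is_inj)
  obtain U' V g g' where "open U'" "x \<in> U'" "open V" "homeomorphism U' V f g"
    "\<And>y. y \<in> V \<Longrightarrow> (g has_derivative (g' y)) (at y)"
    "\<And>y. y \<in> V \<Longrightarrow> g' y = inv (blinfun_apply (f'(g y)))"
    by (rule inverse_function_theorem[of UNIV f f' x, OF _ _ _ _ inv])
       (use assms(1) in \<open>auto simp: C1_with_def\<close>)
  then show ?thesis by metis
qed

lemma blinfun_inv_cont:
  fixes F G :: "'b::metric_space \<Rightarrow> ('a::real_normed_vector \<Rightarrow>\<^sub>L 'a)"
  assumes contF: "continuous_on S F" and GF: "\<And>s. s\<in>S \<Longrightarrow> G s o\<^sub>L F s = id_blinfun"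
    and FG: "\<And>s. s\<in>S \<Longrightarrow> F s o\<^sub>L G s = id_blinfun"
  shows "continuous_on S G"
  unfolding continuous_on_iff
proof (intro ballI allI impI)
  fix s0 and e :: real assume s0: "s0 \<in> S" and e: "e > 0"
  define c where "c = norm (G s0) + 1"
  have c: "c > 0" "norm (G s0) \<le> c" unfolding c_def by (auto intro: add_nonneg_pos)
  have "0 < min (1/(2*c)) (e/(2*c*c))" using c e by auto
  then obtain d where d: "d > 0" and dd: "\<And>s. s\<in>S \<Longrightarrow> dist s s0 < d \<Longrightarrow> dist (F s) (F s0) < min (1/(2*c)) (e/(2*c*c))"
    using contF s0 unfolding continuous_on_iff by metis
  show "\<exists>d>0. \<forall>s\<in>S. dist s s0 < d \<longrightarrow> dist (G s) (G s0) < e"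
  proof (intro exI[of _ d] conjI ballI impI d)
    fix s assume s: "s \<in> S" and ds: "dist s s0 < d"
    have FF: "norm (F s0 - F s) < min (1/(2*c)) (e/(2*c*c))"
      using dd[OF s ds] by (simp add: dist_norm norm_minus_commute)
    have nGs: "norm (G s) \<le> 2 * c"
    proof (rule norm_blinfun_bound)
      show "0 \<le> 2 * c" using c by auto
      fix w
      let ?v = "blinfun_apply (G s) w"
      have Fv: "blinfun_apply (F s) ?v = w"
        using FG[OF s] by (metis blinfun_apply_blinfun_compose blinfun_apply_id_blinfun)
      have "?v = blinfun_apply (G s0) (blinfun_apply (F s0) ?v)"
        using GF[OF s0] by (metis blinfun_apply_blinfun_compose blinfun_apply_id_blinfun)
      then have "norm ?v \<le> c * norm (blinfun_apply (F s0) ?v)"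
        by (metis c(2) norm_blinfun mult_right_mono norm_ge_zero order_trans)
      also have "blinfun_apply (F s0) ?v = w + blinfun_apply (F s0 - F s) ?v"
        using Fv by (simp add: blinfun.diff_left)
      also have "norm (w + blinfun_apply (F s0 - F s) ?v) \<le> norm w + norm (F s0 - F s) * norm ?v"
        by (meson norm_blinfun norm_triangle_le add_left_mono)
      also have "\<dots> \<le> norm w + (1/(2*c)) * norm ?v"
        using FF by (intro add_left_mono mult_right_mono) auto
      finally have "norm ?v \<le> c * norm w + norm ?v / 2"
        using c by (simp add: algebra_simps)
      then show "norm ?v \<le> 2 * c * norm w" by simp
    qed
    have eq: "G s - G s0 = G s o\<^sub>L (F s0 - F s) o\<^sub>L G s0"
    proof (rule blinfun_eqI)
      fix w
      show "blinfun_apply (G s - G s0) w = blinfun_apply (G s o\<^sub>L (F s0 - F s) o\<^sub>L G s0) w"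
        using GF[OF s] FG[OF s0]
        by (simp add: blinfun.diff_left blinfun.diff_right)
           (metis blinfun_apply_blinfun_compose blinfun_apply_id_blinfun)
    qed
    have "norm (G s - G s0) \<le> norm (G s) * norm (F s0 - F s) * norm (G s0)"
      unfolding eq by (meson norm_blinfun_compose order_trans mult_right_mono norm_ge_zero)
    also have "\<dots> \<le> (2*c) * norm (F s0 - F s) * c"
      using nGs c by (intro mult_mono) auto
    also have "\<dots> < (2*c) * (e/(2*c*c)) * c"
      using FF c by (intro mult_strict_right_mono mult_strict_left_mono) auto
    also have "\<dots> = e" using c by (simp add: field_simps)
    finally show "dist (G s) (G s0) < e" by (simp add: dist_norm)
  qed
qed

lemma cont_on_open_near:
  fixes \<gamma> :: "'c::metric_space \<Rightarrow> 'a::metric_space"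
  assumes "continuous_on S \<gamma>" "s \<in> S" "open U" "\<gamma> s \<in> U"
  shows "\<exists>d>0. \<forall>s'\<in>S. dist s' s < d \<longrightarrow> \<gamma> s' \<in> U"
proof -
  obtain e where e: "e > 0" "ball (\<gamma> s) e \<subseteq> U" using assms(3,4) open_contains_ball by blast
  then obtain d where "d > 0" "\<forall>s'\<in>S. dist s' s < d \<longrightarrow> dist (\<gamma> s') (\<gamma> s) < e"
    using assms(1,2) unfolding continuous_on_iff by metis
  then show ?thesis using e by (metis dist_commute mem_ball subsetD)
qed

lemma lift_unique:
  fixes f :: "'a::real_normed_vector \<Rightarrow> 'b" and \<gamma>1 \<gamma>2 :: "real \<Rightarrow> 'a"
  assumes LI: "\<And>x. \<exists>U. open U \<and> x \<in> U \<and> inj_on f U"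
    and c1: "continuous_on {0..r} \<gamma>1" and c2: "continuous_on {0..r} \<gamma>2"
    and z: "\<gamma>1 0 = \<gamma>2 0" and ff: "\<And>s. s\<in>{0..r} \<Longrightarrow> f (\<gamma>1 s) = f (\<gamma>2 s)"
    and s: "s \<in> {0..r}"
  shows "\<gamma>1 s = \<gamma>2 s"
proof -
  define S where "S = {0..r::real}"
  define T where "T = {x \<in> S. (\<lambda>t. \<gamma>1 t - \<gamma>2 t) x = 0}"
  have cl: "closedin (top_of_set S) T"
    unfolding T_def by (rule continuous_closedin_preimage_constant) (intro continuous_intros c1[folded S_def] c2[folded S_def])
  have op: "openin (top_of_set S) T"
    unfolding openin_euclidean_subtopology_iff
  proof (intro conjI ballI)
    show "T \<subseteq> S" unfolding T_def by blast
    fix t assume t: "t \<in> T"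
    then have tS: "t \<in> S" and eqt: "\<gamma>1 t = \<gamma>2 t" unfolding T_def by auto
    obtain U where U: "open U" "\<gamma>1 t \<in> U" "inj_on f U" using LI by blast
    have U2: "\<gamma>2 t \<in> U" using eqt U(2) by simp
    obtain d1 where d1: "d1 > 0" "\<forall>s'\<in>S. dist s' t < d1 \<longrightarrow> \<gamma>1 s' \<in> U"
      using cont_on_open_near[OF c1[folded S_def] tS U(1,2)] by blast
    obtain d2 where d2: "d2 > 0" "\<forall>s'\<in>S. dist s' t < d2 \<longrightarrow> \<gamma>2 s' \<in> U"
      using cont_on_open_near[OF c2[folded S_def] tS U(1) U2] by blast
    show "\<exists>e>0. \<forall>x'\<in>S. dist x' t < e \<longrightarrow> x' \<in> T"
    proof (intro exI[of _ "min d1 d2"] conjI ballI impI)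
      show "0 < min d1 d2" using d1 d2 by simp
      fix x' assume x': "x' \<in> S" "dist x' t < min d1 d2"
      then have "\<gamma>1 x' \<in> U" "\<gamma>2 x' \<in> U" using d1 d2 by auto
      moreover have "f (\<gamma>1 x') = f (\<gamma>2 x')" using ff x'(1) unfolding S_def by blast
      ultimately have "\<gamma>1 x' = \<gamma>2 x'" using U(3) by (meson inj_onD)
      then show "x' \<in> T" using x' unfolding T_def by simp
    qed
  qed
  have "connected S" unfolding S_def by simp
  moreover have "0 \<in> T" using z s unfolding T_def S_def by simp
  ultimately have "T = S" using cl op unfolding connected_clopen by blast
  then have "s \<in> T" using s unfolding S_def by simp
  then show ?thesis unfolding T_def by simp
qed

lemma cont_induct:
  fixes P :: "real \<Rightarrow> bool"
  assumes step: "\<And>t. 0 \<le> t \<Longrightarrow> (\<forall>s. 0 \<le> s \<and> s < t \<longrightarrow> P s) \<Longrightarrow> \<exists>e>0. \<forall>s. 0 \<le> s \<and> s < t + e \<longrightarrow> P s"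
    and a: "0 \<le> a"
  shows "P a"
proof (rule ccontr)
  assume na: "\<not> P a"
  define A where "A = {t. 0 \<le> t \<and> \<not> P t}"
  define T where "T = Inf A"
  have ne: "A \<noteq> {}" using a na unfolding A_def by auto
  have bdd: "bdd_below A" unfolding A_def by (rule bdd_belowI[of _ 0]) auto
  have T0: "0 \<le> T" unfolding T_def using ne by (rule cInf_greatest) (auto simp: A_def)
  have "\<forall>s. 0 \<le> s \<and> s < T \<longrightarrow> P s"
  proof (intro allI impI)
    fix s assume s: "0 \<le> s \<and> s < T"
    show "P s"
    proof (rule ccontr)
      assume "\<not> P s"
      then have "s \<in> A" using s unfolding A_def by simp
      then have "T \<le> s" unfolding T_def using bdd by (rule cInf_lower)
      then show False using s by simp
    qed
  qed
  then obtain e where e: "e > 0" "\<forall>s. 0 \<le> s \<and> s < T + e \<longrightarrow> P s" using step T0 by blast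
  have "Inf A < T + e" using e(1) unfolding T_def by simp
  then obtain x where x: "x \<in> A" "x < T + e" using cInf_lessD[OF ne] by blast
  then show False using e(2) unfolding A_def by auto
qed

lemma k_bound:
  fixes f :: "'a::euclidean_space \<Rightarrow> 'a" and f' :: "'a \<Rightarrow> 'a \<Rightarrow>\<^sub>L 'a"
    and k :: "'a \<Rightarrow> real" and k' :: "'a \<Rightarrow> 'a \<Rightarrow>\<^sub>L real" and \<gamma> :: "real \<Rightarrow> 'a"
  assumes C1f: "C1_with f f'" and bij: "\<forall>x. bij (blinfun_apply (f' x))" and C1k: "C1_with k k'"
    and M: "\<And>x. onorm (blinfun_apply (k' x) \<circ> inv (blinfun_apply (f' x))) \<le> M"
    and c: "continuous_on {0..r} \<gamma>" and lift: "\<And>s. s\<in>{0..r} \<Longrightarrow> f (\<gamma> s) = a + s *\<^sub>R w"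
    and r: "0 \<le> r"
  shows "\<bar>k (\<gamma> r) - k (\<gamma> 0)\<bar> \<le> M * norm w * r"
proof -
  let ?S = "{0..r}"
  let ?D = "\<lambda>\<tau> d. blinfun_apply (k' (\<gamma> \<tau>)) (inv (blinfun_apply (f' (\<gamma> \<tau>))) (d *\<^sub>R w))"
  have der: "((k \<circ> \<gamma>) has_derivative ?D \<tau>) (at \<tau> within ?S)" if \<tau>: "\<tau> \<in> ?S" for \<tau>
  proof -
    obtain U V h where UVh: "open U" "\<gamma> \<tau> \<in> U" "open V" "homeomorphism U V f h"
      and hder: "\<forall>y\<in>V. (h has_derivative inv (blinfun_apply (f' (h y)))) (at y)"
      using local_inv[OF C1f bij, of "\<gamma> \<tau>"] by blast
    have hf: "\<And>x. x \<in> U \<Longrightarrow> h (f x) = x" and fU: "\<And>x. x \<in> U \<Longrightarrow> f x \<in> V"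
      using UVh(4) unfolding homeomorphism_def by auto
    obtain d where d: "d > 0" "\<forall>s'\<in>?S. dist s' \<tau> < d \<longrightarrow> \<gamma> s' \<in> U"
      using cont_on_open_near[OF c \<tau> UVh(1,2)] by blast
    have sV: "a + \<tau> *\<^sub>R w \<in> V" using fU[OF UVh(2)] lift[OF \<tau>] by simp
    have hs: "h (a + \<tau> *\<^sub>R w) = \<gamma> \<tau>" using hf[OF UVh(2)] lift[OF \<tau>] by simp
    have "((\<lambda>s. s *\<^sub>R w) has_derivative (\<lambda>d. d *\<^sub>R w)) (at \<tau> within ?S)"
      by (rule bounded_linear_imp_has_derivative) (rule bounded_linear_scaleR_left)
    then have "((\<lambda>s. a + s *\<^sub>R w) has_derivative (\<lambda>d. 0 + d *\<^sub>R w)) (at \<tau> within ?S)"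
      by (rule has_derivative_add[OF has_derivative_const])
    then have d1: "((\<lambda>s. a + s *\<^sub>R w) has_derivative (\<lambda>d. d *\<^sub>R w)) (at \<tau> within ?S)"
      by simp
    have d2: "(h has_derivative inv (blinfun_apply (f' (\<gamma> \<tau>)))) (at (a + \<tau> *\<^sub>R w))"
      using hder sV hs by metis
    have d3: "(k has_derivative blinfun_apply (k' (\<gamma> \<tau>))) (at (h (a + \<tau> *\<^sub>R w)))"
      using C1k hs unfolding C1_with_def by metis
    have "((\<lambda>s. k (h (a + s *\<^sub>R w))) has_derivative ?D \<tau>) (at \<tau> within ?S)"
      using has_derivative_compose[OF has_derivative_compose[OF d1 d2] d3] .
    then show ?thesis
    proof (rule has_derivative_transform_within[OF _ d(1) \<tau>])
      fix s' assume "s' \<in> ?S" "dist s' \<tau> < d"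
      then have "\<gamma> s' \<in> U" using d by auto
      then show "k (h (a + s' *\<^sub>R w)) = (k \<circ> \<gamma>) s'" using hf lift \<open>s' \<in> ?S\<close> by (metis comp_apply)
    qed
  qed
  have bnd: "onorm (?D \<tau>) \<le> M * norm w" for \<tau>
  proof (rule onorm_le)
    fix d :: real
    have bl: "bounded_linear (blinfun_apply (k' (\<gamma> \<tau>)) \<circ> inv (blinfun_apply (f' (\<gamma> \<tau>))))"
      unfolding o_def by (rule bounded_linear_compose[OF blinfun.bounded_linear_right])
        (use bij in \<open>simp add: bij_is_inj inj_linear_imp_inv_bounded_linear blinfun.bounded_linear_right\<close>)
    have "norm (?D \<tau> d) \<le> onorm (blinfun_apply (k' (\<gamma> \<tau>)) \<circ> inv (blinfun_apply (f' (\<gamma> \<tau>)))) * norm (d *\<^sub>R w)"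
      using onorm[OF bl, of "d *\<^sub>R w"] by simp
    also have "\<dots> \<le> M * norm (d *\<^sub>R w)" using M by (intro mult_right_mono) auto
    finally show "norm (?D \<tau> d) \<le> M * norm w * norm d" by (simp add: mult_ac)
  qed
  have "norm ((k \<circ> \<gamma>) r - (k \<circ> \<gamma>) 0) \<le> M * norm w * norm (r - 0)"
  proof (rule differentiable_bound[where f'="?D"])
    show "convex ?S" by (rule convex_real_interval)
    show "r \<in> ?S" "0 \<in> ?S" using r by auto
  qed (use der bnd in blast)+
  then show ?thesis using r by simp
qed

lemma prod_slice1:
  assumes "continuous_on (N \<times> T) (\<lambda>p. \<Phi> (fst p) (snd p))" "y \<in> N"
  shows "continuous_on T (\<Phi> y)"
proof -
  have "continuous_on T ((\<lambda>p. \<Phi> (fst p) (snd p)) \<circ> (\<lambda>s. (y, s)))"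
    by (rule continuous_on_compose) (auto intro!: continuous_intros continuous_on_subset[OF assms(1)] simp: assms(2))
  then show ?thesis by (simp add: o_def)
qed

lemma prod_slice2:
  assumes "continuous_on (N \<times> T) (\<lambda>p. \<Phi> (fst p) (snd p))" "r \<in> T"
  shows "continuous_on N (\<lambda>y. \<Phi> y r)"
proof -
  have "continuous_on N ((\<lambda>p. \<Phi> (fst p) (snd p)) \<circ> (\<lambda>y. (y, r)))"
    by (rule continuous_on_compose) (auto intro!: continuous_intros continuous_on_subset[OF assms(1)] simp: assms(2))
  then show ?thesis by (simp add: o_def)
qed

lemma param_lift:
  fixes f :: "'a::euclidean_space \<Rightarrow> 'a" and k :: "'a \<Rightarrow> real"
  assumes contf: "continuous_on UNIV f"
    and LH: "\<And>x. \<exists>U V h. open U \<and> x \<in> U \<and> open V \<and> homeomorphism U V f h"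
    and cmp: "\<And>K. compact {x. k x \<le> K}"
    and L: "0 \<le> L"
    and KB: "\<And>\<gamma> y r. 0 \<le> r \<Longrightarrow> continuous_on {0..r} \<gamma> \<Longrightarrow> \<gamma> 0 = x0 \<Longrightarrow>
        (\<forall>s\<in>{0..r}. f (\<gamma> s) = f x0 + s *\<^sub>R (y - f x0)) \<Longrightarrow> k (\<gamma> r) \<le> k x0 + L * norm (y - f x0) * r"
    and t1: "0 \<le> t1"
  shows "\<exists>N \<Phi>. open N \<and> y1 \<in> N \<and> continuous_on (N \<times> {0..t1}) (\<lambda>p. \<Phi> (fst p) (snd p)) \<and>
     (\<forall>y\<in>N. \<Phi> y 0 = x0 \<and> (\<forall>r\<in>{0..t1}. f (\<Phi> y r) = f x0 + r *\<^sub>R (y - f x0)))"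
proof -
  define y0 where "y0 = f x0"
  define \<sigma> where "\<sigma> y r = y0 + r *\<^sub>R (y - y0)" for y and r :: real
  define Q where "Q s \<longleftrightarrow> (\<exists>N \<Phi>. open N \<and> y1 \<in> N \<and> continuous_on (N \<times> {0..s}) (\<lambda>p. \<Phi> (fst p) (snd p)) \<and>
     (\<forall>y\<in>N. \<Phi> y 0 = x0 \<and> (\<forall>r\<in>{0..s}. f (\<Phi> y r) = \<sigma> y r)))" for s
  have nz: "norm (y1 - y0) + 1 > 0" by (simp add: add_nonneg_pos)
  have contf': "continuous_on S f" for S using contf continuous_on_subset by blast
  have \<sigma>c: "continuous_on S (\<lambda>p. \<sigma> (fst p) (snd p))" for S unfolding \<sigma>_def by (intro continuous_intros)
  have "Q t1"
  proof (rule cont_induct[OF _ t1])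
    fix t :: real assume t0: "0 \<le> t" and IH: "\<forall>s. 0 \<le> s \<and> s < t \<longrightarrow> Q s"
    show "\<exists>e>0. \<forall>s. 0 \<le> s \<and> s < t + e \<longrightarrow> Q s"
    proof (cases "t = 0")
      case True
      obtain U V h where UVh: "open U" "x0 \<in> U" "open V" "homeomorphism U V f h" using LH by blast
      have hf: "\<And>x. x \<in> U \<Longrightarrow> h (f x) = x" and fh: "\<And>y. y \<in> V \<Longrightarrow> f (h y) = y"
        and fU: "\<And>x. x \<in> U \<Longrightarrow> f x \<in> V" and ch: "continuous_on V h"
        using UVh(4) unfolding homeomorphism_def by auto
      obtain \<delta> where \<delta>: "\<delta> > 0" "ball y0 \<delta> \<subseteq> V" using UVh fU[OF UVh(2)] open_contains_ball y0_def by blast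
      define e where "e = \<delta> / (2 * (norm (y1 - y0) + 1))"
      have e: "e > 0" unfolding e_def using \<delta> by (auto intro!: divide_pos_pos add_nonneg_pos)
      show ?thesis
      proof (intro exI[of _ e] conjI allI impI e)
        fix s assume s: "0 \<le> s \<and> s < t + e"
        have inV: "\<sigma> y r \<in> V" if y: "y \<in> ball y1 1" and r: "r \<in> {0..s}" for y r
        proof -
          have "norm (y - y0) \<le> norm (y - y1) + norm (y1 - y0)" using norm_triangle_ineq[of "y - y1" "y1 - y0"] by simp
          also have "\<dots> < 1 + norm (y1 - y0)" using y by (simp add: dist_norm norm_minus_commute)
          finally have ny: "norm (y - y0) < norm (y1 - y0) + 1" by simp
          have "norm (\<sigma> y r - y0) = r * norm (y - y0)" using r by (simp add: \<sigma>_def)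
          also have "\<dots> \<le> e * (norm (y1 - y0) + 1)"
            using r s True ny by (intro mult_mono) auto
          also have "\<dots> = \<delta> / 2" unfolding e_def using nz by (simp add: field_simps)
          finally show ?thesis using \<delta> by (auto simp: dist_norm norm_minus_commute intro!: subsetD[OF \<delta>(2)])
        qed
        show "Q s" unfolding Q_def
        proof (intro exI[of _ "ball y1 1"] exI[of _ "\<lambda>y r. h (\<sigma> y r)"] conjI ballI)
          show "continuous_on (ball y1 1 \<times> {0..s}) (\<lambda>p. h (\<sigma> (fst p) (snd p)))"
            by (rule continuous_on_compose2[OF ch \<sigma>c]) (auto intro: inV)
          fix y assume y: "y \<in> ball y1 1"
          show "h (\<sigma> y 0) = x0" using hf[OF UVh(2)] by (simp add: \<sigma>_def y0_def)
          fix r assume "r \<in> {0..s}"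
          then show "f (h (\<sigma> y r)) = \<sigma> y r" using fh inV y by blast
        qed auto
      qed
    next
      case False
      then have tpos: "t > 0" using t0 by simp
      define R where "R s N \<Phi> \<longleftrightarrow> open N \<and> y1 \<in> N \<and> continuous_on (N \<times> {0..s}) (\<lambda>p. \<Phi> (fst p) (snd p)) \<and>
     (\<forall>y\<in>N. \<Phi> y 0 = x0 \<and> (\<forall>r\<in>{0..s}. f (\<Phi> y r) = \<sigma> y r))" for s N and \<Phi> :: "'a \<Rightarrow> real \<Rightarrow> 'a"
      have ex: "\<forall>s. \<exists>N. \<exists>\<Phi>. 0 \<le> s \<and> s < t \<longrightarrow> R s N \<Phi>"
      proof
        fix s
        show "\<exists>N. \<exists>\<Phi>. 0 \<le> s \<and> s < t \<longrightarrow> R s N \<Phi>"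
        proof (cases "0 \<le> s \<and> s < t")
          case True
          then have "Q s" using IH by blast
          then show ?thesis unfolding Q_def R_def by blast
        qed blast
      qed
      obtain NN where NN: "\<forall>s. \<exists>\<Phi>. 0 \<le> s \<and> s < t \<longrightarrow> R s (NN s) \<Phi>"
        using choice[OF ex] by blast
      obtain PP where "\<forall>s. 0 \<le> s \<and> s < t \<longrightarrow> R s (NN s) (PP s)"
        using choice[OF NN] by blast
      then have NP: "\<And>s. 0 \<le> s \<Longrightarrow> s < t \<Longrightarrow> open (NN s) \<and> y1 \<in> NN s \<and>
          continuous_on (NN s \<times> {0..s}) (\<lambda>p. PP s (fst p) (snd p)) \<and>
          (\<forall>y\<in>NN s. PP s y 0 = x0 \<and> (\<forall>r\<in>{0..s}. f (PP s y r) = \<sigma> y r))"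
        unfolding R_def by blast
      define rr where "rr n = t - t / real (Suc (Suc n))" for n :: nat
      have rr: "0 \<le> rr n" "rr n < t" for n
        using tpos by (auto simp: rr_def field_simps)
      have rrlim: "rr \<longlonglongrightarrow> t"
      proof -
        have "(\<lambda>n. t / real (Suc (Suc n))) \<longlonglongrightarrow> 0"
          using LIMSEQ_Suc[OF LIMSEQ_Suc[OF lim_const_over_n[of t]]] by simp
        then show ?thesis unfolding rr_def using tendsto_diff[of "\<lambda>_. t" t sequentially] by fastforce
      qed
      define z where "z n = PP (rr n) y1 (rr n)" for n
      define K where "K = k x0 + L * norm (y1 - y0) * t"
      have zK: "z n \<in> {x. k x \<le> K}" for n
      proof -
        have P: "open (NN (rr n)) \<and> y1 \<in> NN (rr n) \<and>
          continuous_on (NN (rr n) \<times> {0..rr n}) (\<lambda>p. PP (rr n) (fst p) (snd p)) \<and>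
          (\<forall>y\<in>NN (rr n). PP (rr n) y 0 = x0 \<and> (\<forall>r\<in>{0..rr n}. f (PP (rr n) y r) = \<sigma> y r))"
          using NP rr by blast
        have c: "continuous_on {0..rr n} (PP (rr n) y1)" using prod_slice1 P by blast
        have lf: "\<forall>s\<in>{0..rr n}. f (PP (rr n) y1 s) = f x0 + s *\<^sub>R (y1 - f x0)"
          using P unfolding \<sigma>_def y0_def by blast
        have z0: "PP (rr n) y1 0 = x0" using P by blast
        have "k (z n) \<le> k x0 + L * norm (y1 - y0) * rr n"
          unfolding z_def y0_def by (rule KB[OF rr(1) c z0 lf])
        also have "\<dots> \<le> K" unfolding K_def using L rr[of n] by (intro add_left_mono mult_left_mono) auto
        finally show ?thesis by simp
      qed
      obtain l \<phi> where l: "strict_mono (\<phi> :: nat \<Rightarrow> nat)" "(z \<circ> \<phi>) \<longlonglongrightarrow> l"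
        using cmp[of K] zK unfolding compact_def by metis
      have rphi: "(rr \<circ> \<phi>) \<longlonglongrightarrow> t" using LIMSEQ_subseq_LIMSEQ[OF rrlim l(1)] .
      have fz: "f (z n) = \<sigma> y1 (rr n)" for n
      proof -
        have "rr n \<in> {0..rr n}" using rr(1)[of n] by simp
        then show ?thesis using NP[OF rr(1) rr(2), of n] unfolding z_def by blast
      qed
      have "(\<lambda>n. f ((z \<circ> \<phi>) n)) \<longlonglongrightarrow> f l"
        using l(2) contf by (intro continuous_on_tendsto_compose[OF contf l(2)]) auto
      moreover have "(\<lambda>n. f ((z \<circ> \<phi>) n)) \<longlonglongrightarrow> \<sigma> y1 t"
        unfolding o_def fz \<sigma>_def using rphi by (auto intro!: tendsto_intros simp: o_def)
      ultimately have fl: "f l = \<sigma> y1 t" using LIMSEQ_unique by blast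
      obtain U V h where UVh: "open U" "l \<in> U" "open V" "homeomorphism U V f h" using LH by blast
      have hf: "\<And>x. x \<in> U \<Longrightarrow> h (f x) = x" and fh: "\<And>y. y \<in> V \<Longrightarrow> f (h y) = y"
        and fU: "\<And>x. x \<in> U \<Longrightarrow> f x \<in> V" and ch: "continuous_on V h"
        using UVh(4) unfolding homeomorphism_def by auto
      obtain \<delta> where \<delta>: "\<delta> > 0" "ball (\<sigma> y1 t) \<delta> \<subseteq> V" using UVh fU[OF UVh(2)] open_contains_ball fl by metis
      define \<eta> where "\<eta> = \<delta> / (4 * (norm (y1 - y0) + 1))"
      have \<eta>: "\<eta> > 0" unfolding \<eta>_def using \<delta> by (auto intro!: divide_pos_pos add_nonneg_pos)
      have \<eta>y: "\<eta> * norm (y1 - y0) < \<delta> / 4"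
      proof -
        have "\<eta> * norm (y1 - y0) < \<eta> * (norm (y1 - y0) + 1)" using \<eta> by simp
        also have "\<dots> = \<delta> / 4" unfolding \<eta>_def using nz by (simp add: field_simps)
        finally show ?thesis .
      qed
      define e where "e = min \<eta> 1"
      have e: "e > 0" "e \<le> \<eta>" "e \<le> 1" using \<eta> by (auto simp: e_def)
      have "\<forall>\<^sub>F n in sequentially. (z \<circ> \<phi>) n \<in> U" using l(2) UVh(1,2) by (rule topological_tendstoD)
      moreover have "\<forall>\<^sub>F n in sequentially. (rr \<circ> \<phi>) n \<in> ball t \<eta>" by (rule topological_tendstoD[OF rphi]) (use \<eta> in auto)
      ultimately obtain n where n: "z (\<phi> n) \<in> U" "rr (\<phi> n) \<in> ball t \<eta>"
        by (metis (mono_tags, lifting) comp_apply eventually_conj_iff eventually_sequentially order_refl)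
      define \<rho> where "\<rho> = rr (\<phi> n)"
      define N where "N = NN \<rho>"
      define \<Phi> where "\<Phi> = PP \<rho>"
      have \<rho>: "0 \<le> \<rho>" "\<rho> < t" "t - \<rho> < \<eta>" using rr n(2) unfolding \<rho>_def by (auto simp: dist_real_def)
      have P: "open N" "y1 \<in> N" "continuous_on (N \<times> {0..\<rho>}) (\<lambda>p. \<Phi> (fst p) (snd p))"
        "\<And>y. y \<in> N \<Longrightarrow> \<Phi> y 0 = x0" "\<And>y r. y \<in> N \<Longrightarrow> r \<in> {0..\<rho>} \<Longrightarrow> f (\<Phi> y r) = \<sigma> y r"
        using NP[OF \<rho>(1,2)] unfolding N_def \<Phi>_def by auto
      define N' where "N' = (N \<inter> (\<lambda>y. \<Phi> y \<rho>) -` U) \<inter> ball y1 (\<delta> / (4 * (t + 1)))"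
      have N'N: "N' \<subseteq> N" unfolding N'_def by auto
      have openN': "open N'" unfolding N'_def
        by (intro open_Int continuous_open_preimage prod_slice2[OF P(3)] P(1) UVh(1)) (use \<rho> in auto)
      have y1N': "y1 \<in> N'" unfolding N'_def using P(2) n(1) \<delta> t0
        by (auto simp: z_def \<rho>_def \<Phi>_def intro!: divide_pos_pos)
      have \<Phi>U: "\<Phi> y \<rho> \<in> U" if "y \<in> N'" for y using that unfolding N'_def by auto
      show ?thesis
      proof (intro exI[of _ e] conjI allI impI e)
        fix s assume s: "0 \<le> s \<and> s < t + e"
        have inV: "\<sigma> y r \<in> V" if y: "y \<in> N'" and r: "\<rho> \<le> r" "r \<le> s" for y r
        proof -
          have ny: "norm (y - y1) < \<delta> / (4 * (t + 1))" using y unfolding N'_def by (simp add: dist_norm norm_minus_commute)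
          have r0: "0 \<le> r" "r \<le> t + 1" using r \<rho> s e by auto
          have "\<sigma> y r - \<sigma> y1 t = r *\<^sub>R (y - y1) + (r - t) *\<^sub>R (y1 - y0)"
            by (simp add: \<sigma>_def algebra_simps)
          then have "norm (\<sigma> y r - \<sigma> y1 t) \<le> r * norm (y - y1) + \<bar>r - t\<bar> * norm (y1 - y0)"
            using r0 by (metis norm_triangle_ineq norm_scaleR abs_of_nonneg)
          also have "r * norm (y - y1) \<le> (t + 1) * (\<delta> / (4 * (t + 1)))"
            using r0 ny by (intro mult_mono) auto
          also have "(t + 1) * (\<delta> / (4 * (t + 1))) = \<delta> / 4" using t0 by (simp add: field_simps)
          also have "\<bar>r - t\<bar> * norm (y1 - y0) \<le> \<eta> * norm (y1 - y0)"
            using r s \<rho> e by (intro mult_right_mono) auto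
          finally have "norm (\<sigma> y r - \<sigma> y1 t) < \<delta>" using \<eta>y \<delta> by linarith
          then show ?thesis using \<delta>(2) by (auto simp: dist_norm norm_minus_commute)
        qed
        show "Q s" unfolding Q_def
        proof (intro exI[of _ N'] exI[of _ "\<lambda>y r. if r \<le> \<rho> then \<Phi> y r else h (\<sigma> y r)"] conjI ballI openN' y1N')
          show "continuous_on (N' \<times> {0..s}) (\<lambda>p. if snd p \<le> \<rho> then \<Phi> (fst p) (snd p) else h (\<sigma> (fst p) (snd p)))"
          proof (rule continuous_on_cases_le)
            show "continuous_on {p \<in> N' \<times> {0..s}. snd p \<le> \<rho>} (\<lambda>p. \<Phi> (fst p) (snd p))"
              by (rule continuous_on_subset[OF P(3)]) (use N'N in auto)
            show "continuous_on {p \<in> N' \<times> {0..s}. \<rho> \<le> snd p} (\<lambda>p. h (\<sigma> (fst p) (snd p)))"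
              by (rule continuous_on_compose2[OF ch \<sigma>c]) (auto intro: inV)
            show "continuous_on (N' \<times> {0..s}) snd" by (intro continuous_intros)
            fix p assume "p \<in> N' \<times> {0..s}" "snd p = \<rho>"
            then show "\<Phi> (fst p) (snd p) = h (\<sigma> (fst p) (snd p))"
              using \<Phi>U P(5) N'N hf \<rho> by (metis mem_Sigma_iff prod.collapse atLeastAtMost_iff order_refl subsetD)
          qed
          fix y assume y: "y \<in> N'"
          show "(if 0 \<le> \<rho> then \<Phi> y 0 else h (\<sigma> y 0)) = x0" using \<rho> P(4) N'N y by auto
          fix r assume r: "r \<in> {0..s}"
          show "f (if r \<le> \<rho> then \<Phi> y r else h (\<sigma> y r)) = \<sigma> y r"
            using r P(5) N'N y fh inV by auto
        qed
      qed
    qed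
  qed
  then show ?thesis unfolding Q_def \<sigma>_def y0_def by blast
qed

lemma backward:
  fixes f :: "'a::euclidean_space \<Rightarrow> 'a" and f' :: "'a \<Rightarrow> 'a \<Rightarrow>\<^sub>L 'a"
    and k :: "'a \<Rightarrow> real" and k' :: "'a \<Rightarrow> 'a \<Rightarrow>\<^sub>L real"
  assumes C1f: "C1_with f f'" and bij: "\<forall>x. bij (blinfun_apply (f' x))" and C1k: "C1_with k k'"
    and coer: "coercive k"
    and M: "\<And>x. onorm (blinfun_apply (k' x) \<circ> inv (blinfun_apply (f' x))) \<le> M"
  shows "global_diffeo f"
proof -
  have contf: "continuous_on UNIV f"
    using C1f unfolding C1_with_def
    by (meson continuous_at_imp_continuous_on has_derivative_continuous)
  have LH: "\<exists>U V h. open U \<and> x \<in> U \<and> open V \<and> homeomorphism U V f h" for x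
    using local_inv[OF C1f bij, of x] by blast
  have LI: "\<exists>U. open U \<and> x \<in> U \<and> inj_on f U" for x
  proof -
    obtain U V h where "open U" "x \<in> U" "homeomorphism U V f h" using LH by blast
    then show ?thesis unfolding homeomorphism_def by (metis inj_on_inverseI)
  qed
  have cmp: "compact {x. k x \<le> K}" for K
  proof -
    have "\<forall>\<^sub>F x in at_infinity. K + 1 \<le> k x"
      using coer unfolding coercive_def filterlim_at_top by blast
    then obtain b where b: "\<And>x. b \<le> norm x \<Longrightarrow> K + 1 \<le> k x" unfolding eventually_at_infinity by blast
    have "{x. k x \<le> K} \<subseteq> cball 0 b"
    proof
      fix x assume "x \<in> {x. k x \<le> K}"
      then show "x \<in> cball 0 b" using b[of x] by (cases "b \<le> norm x") auto
    qed
    then have "bounded {x. k x \<le> K}" using bounded_cball bounded_subset by blast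
    moreover have "closed {x. k x \<le> K}"
      using coer unfolding coercive_def by (intro closed_Collect_le) (auto intro: continuous_intros)
    ultimately show ?thesis using compact_eq_bounded_closed by blast
  qed
  define x0 :: 'a where "x0 = 0"
  have KB: "k (\<gamma> r) \<le> k x0 + \<bar>M\<bar> * norm (y - f x0) * r"
    if "0 \<le> r" "continuous_on {0..r} \<gamma>" "\<gamma> 0 = x0"
      "\<forall>s\<in>{0..r}. f (\<gamma> s) = f x0 + s *\<^sub>R (y - f x0)" for \<gamma> y r
  proof -
    have "\<bar>k (\<gamma> r) - k (\<gamma> 0)\<bar> \<le> M * norm (y - f x0) * r"
      by (rule k_bound[OF C1f bij C1k M, of r \<gamma> "f x0" "y - f x0"]) (use that in auto)
    moreover have "M * norm (y - f x0) * r \<le> \<bar>M\<bar> * norm (y - f x0) * r"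
      using that(1) by (intro mult_right_mono) auto
    ultimately have "k (\<gamma> r) - k (\<gamma> 0) \<le> \<bar>M\<bar> * norm (y - f x0) * r"
      using abs_le_D1 order_trans by blast
    then show ?thesis unfolding that(3) by linarith
  qed
  have PL: "\<exists>N \<Phi>. open N \<and> y1 \<in> N \<and> continuous_on (N \<times> {0..1}) (\<lambda>p. \<Phi> (fst p) (snd p)) \<and>
     (\<forall>y\<in>N. \<Phi> y 0 = x0 \<and> (\<forall>r\<in>{0..1}. f (\<Phi> y r) = f x0 + r *\<^sub>R (y - f x0)))" for y1
  proof -
    have M0: "0 \<le> \<bar>M\<bar>" by simp
    have o1: "0 \<le> (1::real)" by simp
    show ?thesis by (rule param_lift[of f k "\<bar>M\<bar>" x0 1 y1, OF contf LH cmp M0 _ o1]) (metis KB)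
  qed
  define Lift where "Lift y \<gamma> \<longleftrightarrow> continuous_on {0..1} \<gamma> \<and> \<gamma> 0 = x0 \<and>
     (\<forall>s\<in>{0..1}. f (\<gamma> s) = f x0 + s *\<^sub>R (y - f x0))" for y and \<gamma> :: "real \<Rightarrow> 'a"
  have exL: "\<exists>\<gamma>. Lift y \<gamma>" for y
  proof -
    obtain N \<Phi> where "open N" "y \<in> N" "continuous_on (N \<times> {0..1}) (\<lambda>p. \<Phi> (fst p) (snd p))"
      "\<forall>y\<in>N. \<Phi> y 0 = x0 \<and> (\<forall>r\<in>{0..1}. f (\<Phi> y r) = f x0 + r *\<^sub>R (y - f x0))"
      using PL by blast
    then have "Lift y (\<Phi> y)" unfolding Lift_def using prod_slice1 by blast
    then show ?thesis by blast
  qed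
  have uniq: "\<gamma>1 1 = \<gamma>2 1" if "Lift y \<gamma>1" "Lift y \<gamma>2" for y \<gamma>1 \<gamma>2
    by (rule lift_unique[OF LI, of 1 \<gamma>1 \<gamma>2]) (use that in \<open>auto simp: Lift_def\<close>)
  define g where "g y = (SOME \<gamma>. Lift y \<gamma>) 1" for y
  have gL: "Lift y (SOME \<gamma>. Lift y \<gamma>)" for y using exL someI_ex by metis
  have fg: "f (g y) = y" for y using gL[of y] unfolding g_def Lift_def by auto
  have contg: "continuous_on UNIV g"
  proof (rule continuous_at_imp_continuous_on, rule ballI)
    fix y1 :: 'a
    obtain N \<Phi> where N: "open N" "y1 \<in> N" and c: "continuous_on (N \<times> {0..1}) (\<lambda>p. \<Phi> (fst p) (snd p))"
      and P: "\<forall>y\<in>N. \<Phi> y 0 = x0 \<and> (\<forall>r\<in>{0..1}. f (\<Phi> y r) = f x0 + r *\<^sub>R (y - f x0))"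
      using PL by blast
    have "\<forall>y\<in>N. Lift y (\<Phi> y)" unfolding Lift_def using prod_slice1[OF c] P by blast
    then have eq: "\<forall>y\<in>N. \<Phi> y 1 = g y" unfolding g_def using uniq gL by blast
    have "continuous_on N g"
      using continuous_on_eq[OF prod_slice2[OF c, of 1]] eq by auto
    then show "isCont g y1" using N continuous_on_eq_continuous_at by blast
  qed
  have injg: "inj g" by (metis fg injI)
  have op: "open (range g)" by (rule invariance_of_domain[OF contg]) (auto simp: injg)
  have rg: "range g = {x. g (f x) = x}"
  proof
    show "range g \<subseteq> {x. g (f x) = x}" using fg by auto
    show "{x. g (f x) = x} \<subseteq> range g"
    proof
      fix x assume "x \<in> {x. g (f x) = x}"
      then have "x = g (f x)" by simp
      then show "x \<in> range g" by (rule range_eqI)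
    qed
  qed
  have cgf: "continuous_on UNIV (\<lambda>x. g (f x))"
    by (rule continuous_on_compose2[OF contg contf]) auto
  have "closed {x. g (f x) = x}"
    by (rule closed_Collect_eq[OF cgf continuous_on_id])
  then have cl: "closed (range g)" using rg by simp
  have "range g \<inter> UNIV = {} \<or> (- range g) \<inter> UNIV = {}"
    by (rule connectedD[OF connected_UNIV op]) (use cl in auto)
  moreover have "range g \<inter> UNIV \<noteq> {}" by simp
  ultimately have "range g = UNIV" using Compl_empty_eq by auto
  then have gf: "g (f x) = x" for x using rg by auto
  define D where "D y = Blinfun (inv (blinfun_apply (f' (g y))))" for y
  have blinv: "bounded_linear (inv (blinfun_apply (f' x)))" for x
    using bij by (simp add: bij_is_inj inj_linear_imp_inv_bounded_linear blinfun.bounded_linear_right)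
  have Dapp: "blinfun_apply (D y) = inv (blinfun_apply (f' (g y)))" for y
    unfolding D_def using blinv bounded_linear_Blinfun_apply by blast
  have derg: "(g has_derivative blinfun_apply (D y)) (at y)" for y
  proof -
    have "(g has_derivative inv (blinfun_apply (f' (g y)))) (at (f (g y)))"
    proof (rule has_derivative_inverse_strong[of UNIV "g y" f g])
      show "continuous_on UNIV f" by (rule contf)
      show "(f has_derivative blinfun_apply (f' (g y))) (at (g y))" using C1f unfolding C1_with_def by blast
      show "blinfun_apply (f' (g y)) \<circ> inv (blinfun_apply (f' (g y))) = id"
        using bij by (simp add: fun_eq_iff bij_is_surj surj_f_inv_f)
    qed (auto simp: gf)
    then show ?thesis by (simp add: fg Dapp)
  qed
  have contF: "continuous_on UNIV (\<lambda>y. f' (g y))"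
    using C1f unfolding C1_with_def by (intro continuous_on_compose2[OF _ contg]) auto
  have contD: "continuous_on UNIV D"
  proof (rule blinfun_inv_cont[OF contF])
    fix y :: 'a
    show "D y o\<^sub>L f' (g y) = id_blinfun"
      by (rule blinfun_eqI) (use bij in \<open>simp add: Dapp bij_is_inj\<close>)
    show "f' (g y) o\<^sub>L D y = id_blinfun"
      by (rule blinfun_eqI) (use bij in \<open>simp add: Dapp bij_is_surj surj_f_inv_f\<close>)
  qed
  have "C1_map g" unfolding C1_map_def C1_with_def using derg contD by blast
  moreover have "C1_map f" unfolding C1_map_def using C1f by blast
  ultimately show ?thesis unfolding global_diffeo_def using gf fg by blast
qed

lemma forward:
  fixes f :: "'a::euclidean_space \<Rightarrow> 'a" and f' :: "'a \<Rightarrow> 'a \<Rightarrow>\<^sub>L 'a"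
  assumes C1f: "C1_with f f'" and gd: "global_diffeo f"
  shows "(\<forall>x. bij (blinfun_apply (f' x))) \<and>
     (\<exists>k k'. C1_with k k' \<and> (\<forall>x. k x \<ge> 0) \<and> coercive k \<and>
        bdd_above (range (\<lambda>x. onorm (blinfun_apply (k' x) \<circ> inv (blinfun_apply (f' x))))))"
proof -
  obtain g Dg where gf: "\<And>x. g (f x) = x" and fg: "\<And>y. f (g y) = y" and C1g: "C1_with g Dg"
    using gd unfolding global_diffeo_def C1_map_def by blast
  have derf: "\<And>x. (f has_derivative blinfun_apply (f' x)) (at x)" and contf': "continuous_on UNIV f'"
    using C1f unfolding C1_with_def by auto
  have derg: "\<And>x. (g has_derivative blinfun_apply (Dg x)) (at x)"
    using C1g unfolding C1_with_def by auto
  have contf: "continuous_on UNIV f"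
    using derf by (meson continuous_at_imp_continuous_on has_derivative_continuous)
  have contg: "continuous_on UNIV g"
    using derg by (meson continuous_at_imp_continuous_on has_derivative_continuous)
  have bij: "bij (blinfun_apply (f' x))" for x
  proof -
    have "((\<lambda>x. g (f x)) has_derivative (\<lambda>v. blinfun_apply (Dg (f x)) (blinfun_apply (f' x) v))) (at x)"
      by (rule has_derivative_compose[OF derf derg])
    moreover have "((\<lambda>x. g (f x)) has_derivative (\<lambda>v. v)) (at x)"
      unfolding gf by (rule has_derivative_ident)
    ultimately have e1: "(\<lambda>v. blinfun_apply (Dg (f x)) (blinfun_apply (f' x) v)) = (\<lambda>v. v)"
      by (rule has_derivative_unique)
    have "((\<lambda>y. f (g y)) has_derivative (\<lambda>v. blinfun_apply (f' (g (f x))) (blinfun_apply (Dg (f x)) v))) (at (f x))"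
      by (rule has_derivative_compose[OF derg derf])
    moreover have "((\<lambda>y. f (g y)) has_derivative (\<lambda>v. v)) (at (f x))"
      unfolding fg by (rule has_derivative_ident)
    ultimately have e2: "(\<lambda>v. blinfun_apply (f' x) (blinfun_apply (Dg (f x)) v)) = (\<lambda>v. v)"
      unfolding gf by (rule has_derivative_unique)
    show ?thesis
    proof (rule bijI)
      show "inj (blinfun_apply (f' x))" by (rule inj_on_inverseI[of _ "blinfun_apply (Dg (f x))"]) (metis e1)
      show "surj (blinfun_apply (f' x))" by (rule surjI[of _ "blinfun_apply (Dg (f x))"]) (metis e2)
    qed
  qed
  define k where "k x = sqrt (1 + f x \<bullet> f x)" for x
  define k' where "k' x = inverse (k x) *\<^sub>R (blinfun_inner_left (f x) o\<^sub>L f' x)" for x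
  have kpos: "k x > 0" for x unfolding k_def by (simp add: add_pos_nonneg)
  have k'app: "blinfun_apply (k' x) h = (blinfun_apply (f' x) h \<bullet> f x) / k x" for x h
    unfolding k'_def by (simp only: blinfun.scaleR_left blinfun_apply_blinfun_compose blinfun_inner_left.rep_eq) (simp add: divide_inverse mult.commute)
  have nfk: "norm (f x) \<le> k x" for x
    unfolding k_def norm_eq_sqrt_inner by (simp add: real_sqrt_le_mono)
  have contk: "continuous_on UNIV k"
    unfolding k_def by (intro continuous_intros contf)
  have derk: "(k has_derivative blinfun_apply (k' x)) (at x)" for x
  proof -
    have pos: "0 < 1 + f x \<bullet> f x" by (simp add: add_pos_nonneg)
    have dinner: "((\<lambda>x. f x \<bullet> f x) has_derivative (\<lambda>h. f x \<bullet> blinfun_apply (f' x) h + blinfun_apply (f' x) h \<bullet> f x)) (at x)"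
      using has_derivative_inner[OF derf derf] .
    have "((\<lambda>x. 1 + f x \<bullet> f x) has_derivative (\<lambda>h. 0 + (f x \<bullet> blinfun_apply (f' x) h + blinfun_apply (f' x) h \<bullet> f x))) (at x)"
      by (rule has_derivative_add[OF has_derivative_const dinner])
    then have "((\<lambda>x. sqrt (1 + f x \<bullet> f x)) has_derivative
       (\<lambda>h. (0 + (f x \<bullet> blinfun_apply (f' x) h + blinfun_apply (f' x) h \<bullet> f x)) * (inverse (sqrt (1 + f x \<bullet> f x)) / 2))) (at x)"
      by (rule DERIV_compose_FDERIV[where f=sqrt and g="\<lambda>x. 1 + f x \<bullet> f x", OF DERIV_real_sqrt[OF pos]])
    moreover have "(\<lambda>h. (0 + (f x \<bullet> blinfun_apply (f' x) h + blinfun_apply (f' x) h \<bullet> f x)) * (inverse (sqrt (1 + f x \<bullet> f x)) / 2))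
        = blinfun_apply (k' x)"
    proof
      fix h
      have alg: "(0 + (a + b)) * (inverse s / 2) = b / s" if "a = b" for a b s :: real
        using that by (simp add: field_split_simps)
      have "f x \<bullet> blinfun_apply (f' x) h = blinfun_apply (f' x) h \<bullet> f x" by (rule inner_commute)
      then show "(0 + (f x \<bullet> blinfun_apply (f' x) h + blinfun_apply (f' x) h \<bullet> f x)) * (inverse (sqrt (1 + f x \<bullet> f x)) / 2)
        = blinfun_apply (k' x) h"
        unfolding k'app k_def by (rule alg)
    qed
    ultimately have "((\<lambda>x. sqrt (1 + f x \<bullet> f x)) has_derivative blinfun_apply (k' x)) (at x)" by simp
    then show ?thesis unfolding k_def[abs_def] .
  qed
  have contk': "continuous_on UNIV k'"
    unfolding k'_def using kpos
    by (intro continuous_intros contk contf contf') (auto simp: less_imp_neq[symmetric])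
  have C1k: "C1_with k k'" unfolding C1_with_def using derk contk' by blast
  have bnd: "onorm (blinfun_apply (k' x) \<circ> inv (blinfun_apply (f' x))) \<le> 1" for x
  proof (rule onorm_le)
    fix u
    have "blinfun_apply (f' x) (inv (blinfun_apply (f' x)) u) = u"
      using bij[of x] by (simp add: bij_is_surj surj_f_inv_f)
    then have "(blinfun_apply (k' x) \<circ> inv (blinfun_apply (f' x))) u = (u \<bullet> f x) / k x"
      by (simp add: k'app)
    also have "norm \<dots> \<le> norm u * norm (f x) / k x"
      using kpos[of x] by (simp add: abs_div Cauchy_Schwarz_ineq2 divide_right_mono)
    also have "\<dots> \<le> norm u * k x / k x"
      using kpos[of x] nfk[of x] by (intro divide_right_mono mult_left_mono) auto
    also have "\<dots> = 1 * norm u" using kpos[of x] by simp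
    finally show "norm ((blinfun_apply (k' x) \<circ> inv (blinfun_apply (f' x))) u) \<le> 1 * norm u" .
  qed
  have coer: "coercive k"
    unfolding coercive_def
  proof (intro conjI contk)
    show "filterlim k at_top at_infinity"
      unfolding filterlim_at_top
    proof
      fix Z :: real
      have "compact (g ` cball 0 \<bar>Z\<bar>)"
        by (rule compact_continuous_image) (auto intro: continuous_on_subset[OF contg])
      then obtain R where R: "\<And>x. x \<in> g ` cball 0 \<bar>Z\<bar> \<Longrightarrow> norm x \<le> R"
        using compact_imp_bounded bounded_iff by metis
      have "Z \<le> k x" if "R + 1 \<le> norm x" for x
      proof (rule ccontr)
        assume "\<not> Z \<le> k x"
        then have "norm (f x) \<le> \<bar>Z\<bar>" using nfk[of x] by linarith
        then have "x \<in> g ` cball 0 \<bar>Z\<bar>" using gf[of x] by (metis image_eqI mem_cball_0)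
        then show False using R that by fastforce
      qed
      then show "\<forall>\<^sub>F x in at_infinity. Z \<le> k x" unfolding eventually_at_infinity by blast
    qed
  qed
  have "\<forall>x. k x \<ge> 0" using kpos less_imp_le by blast
  moreover have "bdd_above (range (\<lambda>x. onorm (blinfun_apply (k' x) \<circ> inv (blinfun_apply (f' x)))))"
    using bnd by (intro bdd_aboveI[of _ 1]) auto
  ultimately show ?thesis using bij C1k coer by blast
qed

theorem theorem4p3:
  fixes f :: "real ^ 'n \<Rightarrow> real ^ 'n"
    and f' :: "real ^ 'n \<Rightarrow> ((real ^ 'n) \<Rightarrow>\<^sub>L (real ^ 'n))"
  assumes "C1_with f f'"
  shows "global_diffeo f \<longleftrightarrow>
    ((\<forall>x. det (matrix (blinfun_apply (f' x))) \<noteq> 0) \<and>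
     (\<exists>k k'. C1_with k k' \<and> (\<forall>x. k x \<ge> 0) \<and> coercive k \<and>
        bdd_above (range (\<lambda>x. onorm (blinfun_apply (k' x) \<circ> inv (blinfun_apply (f' x)))))))"
proof -
  have db: "det (matrix (blinfun_apply (f' x))) \<noteq> 0 \<longleftrightarrow> bij (blinfun_apply (f' x))" for x
  proof -
    have bl: "bounded_linear (blinfun_apply (f' x))" by (rule blinfun.bounded_linear_right)
    have eq: "(*v) (matrix (blinfun_apply (f' x))) = blinfun_apply (f' x)"
      using matrix_vector_mul(3)[OF bl] by (simp add: fun_eq_iff)
    have "det (matrix (blinfun_apply (f' x))) \<noteq> 0 \<longleftrightarrow> invertible (matrix (blinfun_apply (f' x)))"
      by (simp add: invertible_det_nz)
    also have "\<dots> \<longleftrightarrow> bij ((*v) (matrix (blinfun_apply (f' x))))" by (rule invertible_eq_bij)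
    finally show ?thesis unfolding eq .
  qed
  show ?thesis
  proof
    assume gd: "global_diffeo f"
    show "(\<forall>x. det (matrix (blinfun_apply (f' x))) \<noteq> 0) \<and>
     (\<exists>k k'. C1_with k k' \<and> (\<forall>x. k x \<ge> 0) \<and> coercive k \<and>
        bdd_above (range (\<lambda>x. onorm (blinfun_apply (k' x) \<circ> inv (blinfun_apply (f' x))))))"
      using forward[OF assms gd] db by blast
  next
    assume R: "(\<forall>x. det (matrix (blinfun_apply (f' x))) \<noteq> 0) \<and>
     (\<exists>k k'. C1_with k k' \<and> (\<forall>x. k x \<ge> 0) \<and> coercive k \<and>
        bdd_above (range (\<lambda>x. onorm (blinfun_apply (k' x) \<circ> inv (blinfun_apply (f' x))))))"
    then have bij: "\<forall>x. bij (blinfun_apply (f' x))" using db by blast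
    obtain k :: "real ^ 'n \<Rightarrow> real" and k' where C1k: "C1_with k k'" and coer: "coercive k"
      and bdd: "bdd_above (range (\<lambda>x. onorm (blinfun_apply (k' x) \<circ> inv (blinfun_apply (f' x)))))"
      using R by blast
    obtain M where M: "\<And>x. onorm (blinfun_apply (k' x) \<circ> inv (blinfun_apply (f' x))) \<le> M"
      using bdd unfolding bdd_above_def by blast
    show "global_diffeo f" by (rule backward[OF assms bij C1k coer M])
  qed
qed

end
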